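(* Let $\Theta$ be a compact subset of $(0,1/2)\times(\mathbb{R}^2\setminus\Delta)$, $\Delta=\{(x,x):x\in\mathbb{R}\}$. Let $W$ be the cumulative distribution function of a probability measure on $\mathbb{R}$, absolutely continuous with respect to Lebesgue measure, with $\int(1+|u|+u^2+|u|^3)dW(u)<\infty$. Let $g(x)=p_0f(x-\alpha_0)+(1-p_0)f(x-\beta_0)$ with $(p_0,\alpha_0,\beta_0)\in\Theta$ and $f$ a probability density on $\mathbb{R}$, let $X_1,\dots,X_n$ be real numbers ($n\ge2$) and $h>0$. For $\theta=(p,\alpha,\beta)\in\Theta$, $u\in\mathbb{R}$, let $M(\theta,u)=pe^{iu\alpha}+(1-p)e^{iu\beta}$, $$Z_k(\theta,u)=\frac{e^{iuX_k}}{M(\theta,u)}-\frac{e^{-iuX_k}}{M(\theta,-u)},\qquad J(\theta,u)=\frac{g^*(u)}{M(\theta,u)}-\frac{g^*(-u)}{M(\theta,-u)},$$ $$S(\theta)=-\frac14\int_{\mathbb{R}}J^2(\theta,u)\,dW(u),\qquad S_n(\theta)=\frac{-1}{4n(n-1)}\sum_{j\ne k,\ j,k=1}^n\int_{|u|\le1/h}Z_k(\theta,u)Z_j(\theta,u)\,dW(u).$$ Then: (i) $S$ is Lipschitz over $\Theta$; (ii) $S_n$ is Lipschitz over $\Theta$; (iii) the Hessian $\ddot S_n$ of $S_n$ with respect to $\theta$ is Lipschitz over $\Theta$.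
   Context: $g^*(u)=\int e^{ixu}g(x)\,dx$ denotes the Fourier transform. *)

theory Defs
  imports "HOL-Probability.Probability"
begin

type_synonym param = "real \<times> real \<times> real"

definition M :: "param \<Rightarrow> real \<Rightarrow> complex" where
  "M \<theta> u = (case \<theta> of (p, a, b) \<Rightarrow>
      of_real p * exp (\<i> * of_real (u * a)) + of_real (1 - p) * exp (\<i> * of_real (u * b)))"

definition mixdens :: "(real \<Rightarrow> real) \<Rightarrow> param \<Rightarrow> real \<Rightarrow> real" where
  "mixdens f \<theta>0 x = (case \<theta>0 of (p0, a0, b0) \<Rightarrow> p0 * f (x - a0) + (1 - p0) * f (x - b0))"

definition fourier :: "(real \<Rightarrow> real) \<Rightarrow> real \<Rightarrow> complex" where
  "fourier g u = (LINT x|lborel. exp (\<i> * of_real (x * u)) * of_real (g x))"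

definition Zk :: "real \<Rightarrow> param \<Rightarrow> real \<Rightarrow> complex" where
  "Zk x \<theta> u = exp (\<i> * of_real (u * x)) / M \<theta> u - exp (- \<i> * of_real (u * x)) / M \<theta> (- u)"

definition J :: "(real \<Rightarrow> real) \<Rightarrow> param \<Rightarrow> param \<Rightarrow> real \<Rightarrow> complex" where
  "J f \<theta>0 \<theta> u = fourier (mixdens f \<theta>0) u / M \<theta> u - fourier (mixdens f \<theta>0) (- u) / M \<theta> (- u)"

definition S :: "real measure \<Rightarrow> (real \<Rightarrow> real) \<Rightarrow> param \<Rightarrow> param \<Rightarrow> complex" where
  "S W f \<theta>0 \<theta> = - (1/4) * (LINT u|W. (J f \<theta>0 \<theta> u)^2)"

definition Sn :: "real measure \<Rightarrow> (nat \<Rightarrow> real) \<Rightarrow> nat \<Rightarrow> real \<Rightarrow> param \<Rightarrow> complex" where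
  "Sn W X n h \<theta> = of_real (- 1 / (4 * real n * (real n - 1))) *
     (\<Sum>(j, k) \<in> {(j, k). j \<in> {1..n} \<and> k \<in> {1..n} \<and> j \<noteq> k}.
        (LINT u:{u. \<bar>u\<bar> \<le> 1 / h}|W. Zk (X k) \<theta> u * Zk (X j) \<theta> u))"

end

theory Submission
  imports Defs
begin


definition lin :: "complex \<Rightarrow> complex \<Rightarrow> complex \<Rightarrow> param \<Rightarrow> complex" where
  "lin x y z d = of_real (fst d) * x + of_real (fst (snd d)) * y + of_real (snd (snd d)) * z"

lemma bounded_linear_lin: "bounded_linear (lin x y z)"
  unfolding lin_def
  by (intro bounded_linear_add bounded_linear_mult_const bounded_linear_compose[OF bounded_linear_of_real]
        bounded_linear_fst bounded_linear_snd bounded_linear_compose[OF bounded_linear_fst]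
        bounded_linear_compose[OF bounded_linear_snd])

lemma norm_lin: "norm (lin x y z d) \<le> (norm x + norm y + norm z) * norm d"
proof -
  have 1: "\<bar>fst d\<bar> \<le> norm d" by (metis norm_fst_le prod.collapse real_norm_def)
  have 2: "\<bar>fst (snd d)\<bar> \<le> norm d"
    by (metis norm_fst_le norm_snd_le order_trans prod.collapse real_norm_def)
  have 3: "\<bar>snd (snd d)\<bar> \<le> norm d"
    by (metis norm_snd_le order_trans prod.collapse real_norm_def)
  have "norm (lin x y z d) \<le> \<bar>fst d\<bar> * norm x + \<bar>fst (snd d)\<bar> * norm y + \<bar>snd (snd d)\<bar> * norm z"
    unfolding lin_def by (rule order_trans[OF norm_triangle_ineq] add_mono)+ (auto simp: norm_mult)
  also have "\<dots> \<le> norm d * norm x + norm d * norm y + norm d * norm z"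
    by (intro add_mono mult_right_mono 1 2 3) auto
  finally show ?thesis by (simp add: algebra_simps)
qed

lemma lin_add: "lin x y z d + lin x' y' z' d = lin (x + x') (y + y') (z + z') d"
  by (simp add: lin_def algebra_simps)
lemma lin_diff: "lin x y z d - lin x' y' z' d = lin (x - x') (y - y') (z - z') d"
  by (simp add: lin_def algebra_simps)
lemma lin_mult: "c * lin x y z d = lin (c * x) (c * y) (c * z) d"
  by (simp add: lin_def algebra_simps)
lemma lin_multr: "lin x y z d * c = lin (x * c) (y * c) (z * c) d"
  by (simp add: lin_def algebra_simps)
lemma lin_zero: "lin 0 0 0 = (\<lambda>_. 0)"
  by (simp add: lin_def fun_eq_iff)
lemma lin_minus_arg: "lin x y z (a - b) = lin x y z a - lin x y z b"
  by (simp add: lin_def algebra_simps)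

primrec Sm :: "nat \<Rightarrow> param set \<Rightarrow> real set \<Rightarrow> (param \<Rightarrow> real \<Rightarrow> complex) \<Rightarrow> bool" where
  "Sm 0 U A F = continuous_on (U \<times> A) (\<lambda>(\<theta>, u). F \<theta> u)"
| "Sm (Suc k) U A F = (continuous_on (U \<times> A) (\<lambda>(\<theta>, u). F \<theta> u) \<and>
     (\<exists>Fp Fa Fb. (\<forall>\<theta>\<in>U. \<forall>u\<in>A. ((\<lambda>\<theta>. F \<theta> u) has_derivative lin (Fp \<theta> u) (Fa \<theta> u) (Fb \<theta> u)) (at \<theta>))
        \<and> Sm k U A Fp \<and> Sm k U A Fa \<and> Sm k U A Fb))"

lemma SmI:
  assumes "continuous_on (U \<times> A) (\<lambda>(\<theta>, u). F \<theta> u)"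
    "\<And>\<theta> u. \<theta> \<in> U \<Longrightarrow> u \<in> A \<Longrightarrow> ((\<lambda>\<theta>. F \<theta> u) has_derivative lin (Fp \<theta> u) (Fa \<theta> u) (Fb \<theta> u)) (at \<theta>)"
    "Sm k U A Fp" "Sm k U A Fa" "Sm k U A Fb"
  shows "Sm (Suc k) U A F"
  unfolding Sm.simps(2) using assms by blast

lemma SmE:
  assumes "Sm (Suc k) U A F"
  obtains Fp Fa Fb where "continuous_on (U \<times> A) (\<lambda>(\<theta>, u). F \<theta> u)"
    "\<And>\<theta> u. \<theta> \<in> U \<Longrightarrow> u \<in> A \<Longrightarrow> ((\<lambda>\<theta>. F \<theta> u) has_derivative lin (Fp \<theta> u) (Fa \<theta> u) (Fb \<theta> u)) (at \<theta>)"
    "Sm k U A Fp" "Sm k U A Fa" "Sm k U A Fb"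
  using assms unfolding Sm.simps(2) by blast

lemma Sm_cont: assumes "Sm k U A F" shows "continuous_on (U \<times> A) (\<lambda>(\<theta>, u). F \<theta> u)"
proof (cases k)
  case 0 with assms show ?thesis by simp
next
  case (Suc m) with assms have "Sm (Suc m) U A F" by simp
  then show ?thesis by (rule SmE)
qed

lemma Sm_mono: "Sm (Suc k) U A F \<Longrightarrow> Sm k U A F"
proof (induction k arbitrary: F)
  case 0 then show ?case by (simp add: Sm_cont)
next
  case (Suc k)
  from Suc.prems obtain Fp Fa Fb where c: "continuous_on (U \<times> A) (\<lambda>(\<theta>, u). F \<theta> u)"
    and d: "\<And>\<theta> u. \<theta> \<in> U \<Longrightarrow> u \<in> A \<Longrightarrow> ((\<lambda>\<theta>. F \<theta> u) has_derivative lin (Fp \<theta> u) (Fa \<theta> u) (Fb \<theta> u)) (at \<theta>)"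
    and s: "Sm (Suc k) U A Fp" "Sm (Suc k) U A Fa" "Sm (Suc k) U A Fb"
    using SmE[OF Suc.prems] by metis
  show ?case by (rule SmI[OF c d Suc.IH[OF s(1)] Suc.IH[OF s(2)] Suc.IH[OF s(3)]])
qed

lemma cont_snd_lift: "continuous_on A c \<Longrightarrow> continuous_on (U \<times> A) (\<lambda>(\<theta>::param, u::real). c u)"
  by (auto intro!: continuous_on_compose2[of A c] continuous_intros simp: split_beta)

lemma Sm_const: "continuous_on A c \<Longrightarrow> Sm k U A (\<lambda>\<theta> u. c u)"
proof (induction k arbitrary: c)
  case 0
  then show ?case by (simp add: cont_snd_lift)
next
  case (Suc k)
  have c0: "continuous_on A (\<lambda>u. 0::complex)" by simp
  show ?case
    by (rule SmI[OF cont_snd_lift[OF Suc.prems] _ Suc.IH[OF c0] Suc.IH[OF c0] Suc.IH[OF c0]])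
      (simp add: lin_zero)
qed

lemma Sm_add: "Sm k U A F \<Longrightarrow> Sm k U A G \<Longrightarrow> Sm k U A (\<lambda>\<theta> u. F \<theta> u + G \<theta> u)"
proof (induction k arbitrary: F G)
  case 0
  then show ?case using continuous_on_add[OF Sm_cont[OF 0(1)] Sm_cont[OF 0(2)]] by (simp add: split_beta)
next
  case (Suc k)
  obtain Fp Fa Fb where
    F: "\<And>\<theta> u. \<theta> \<in> U \<Longrightarrow> u \<in> A \<Longrightarrow> ((\<lambda>\<theta>. F \<theta> u) has_derivative lin (Fp \<theta> u) (Fa \<theta> u) (Fb \<theta> u)) (at \<theta>)"
      "Sm k U A Fp" "Sm k U A Fa" "Sm k U A Fb" using SmE[OF Suc.prems(1)] by metis
  obtain Gp Ga Gb where
    G: "\<And>\<theta> u. \<theta> \<in> U \<Longrightarrow> u \<in> A \<Longrightarrow> ((\<lambda>\<theta>. G \<theta> u) has_derivative lin (Gp \<theta> u) (Ga \<theta> u) (Gb \<theta> u)) (at \<theta>)"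
      "Sm k U A Gp" "Sm k U A Ga" "Sm k U A Gb" using SmE[OF Suc.prems(2)] by metis
  have c: "continuous_on (U \<times> A) (\<lambda>(\<theta>, u). F \<theta> u + G \<theta> u)"
    using continuous_on_add[OF Sm_cont[OF Suc.prems(1)] Sm_cont[OF Suc.prems(2)]] by (simp add: split_beta)
  have d: "((\<lambda>\<theta>. F \<theta> u + G \<theta> u) has_derivative
     lin (Fp \<theta> u + Gp \<theta> u) (Fa \<theta> u + Ga \<theta> u) (Fb \<theta> u + Gb \<theta> u)) (at \<theta>)"
    if "\<theta> \<in> U" "u \<in> A" for \<theta> u
    using has_derivative_add[OF F(1)[OF that] G(1)[OF that]] by (simp add: lin_add)
  show ?case by (rule SmI[OF c d Suc.IH Suc.IH Suc.IH]) (use F G in auto)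
qed

lemma Sm_mult: "Sm k U A F \<Longrightarrow> Sm k U A G \<Longrightarrow> Sm k U A (\<lambda>\<theta> u. F \<theta> u * G \<theta> u)"
proof (induction k arbitrary: F G)
  case 0
  then show ?case using continuous_on_mult[OF Sm_cont[OF 0(1)] Sm_cont[OF 0(2)]] by (simp add: split_beta)
next
  case (Suc k)
  obtain Fp Fa Fb where
    F: "\<And>\<theta> u. \<theta> \<in> U \<Longrightarrow> u \<in> A \<Longrightarrow> ((\<lambda>\<theta>. F \<theta> u) has_derivative lin (Fp \<theta> u) (Fa \<theta> u) (Fb \<theta> u)) (at \<theta>)"
      "Sm k U A Fp" "Sm k U A Fa" "Sm k U A Fb" using SmE[OF Suc.prems(1)] by metis
  obtain Gp Ga Gb where
    G: "\<And>\<theta> u. \<theta> \<in> U \<Longrightarrow> u \<in> A \<Longrightarrow> ((\<lambda>\<theta>. G \<theta> u) has_derivative lin (Gp \<theta> u) (Ga \<theta> u) (Gb \<theta> u)) (at \<theta>)"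
      "Sm k U A Gp" "Sm k U A Ga" "Sm k U A Gb" using SmE[OF Suc.prems(2)] by metis
  have Fk: "Sm k U A F" and Gk: "Sm k U A G" using Sm_mono[OF Suc.prems(1)] Sm_mono[OF Suc.prems(2)] by auto
  have c: "continuous_on (U \<times> A) (\<lambda>(\<theta>, u). F \<theta> u * G \<theta> u)"
    using continuous_on_mult[OF Sm_cont[OF Suc.prems(1)] Sm_cont[OF Suc.prems(2)]] by (simp add: split_beta)
  have d: "((\<lambda>\<theta>. F \<theta> u * G \<theta> u) has_derivative
     lin (F \<theta> u * Gp \<theta> u + Fp \<theta> u * G \<theta> u) (F \<theta> u * Ga \<theta> u + Fa \<theta> u * G \<theta> u)
         (F \<theta> u * Gb \<theta> u + Fb \<theta> u * G \<theta> u)) (at \<theta>)"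
    if "\<theta> \<in> U" "u \<in> A" for \<theta> u
    using has_derivative_mult[OF F(1)[OF that] G(1)[OF that]] by (simp add: lin_def[abs_def] algebra_simps)
  have e: "Sm k U A (\<lambda>\<theta> u. F \<theta> u * Gx \<theta> u + Fx \<theta> u * G \<theta> u)"
    if "Sm k U A Gx" "Sm k U A Fx" for Gx Fx
    using Suc.IH[OF Fk that(1)] Suc.IH[OF that(2) Gk] by (rule Sm_add)
  show ?case by (rule SmI[OF c d e e e]) (use F G in auto)
qed



lemma Sm_cmult: "Sm k U A F \<Longrightarrow> Sm k U A (\<lambda>\<theta> u. c * F \<theta> u)"
  using Sm_mult[OF Sm_const[of A "\<lambda>_. c"]] by simp

lemma Sm_uminus: "Sm k U A F \<Longrightarrow> Sm k U A (\<lambda>\<theta> u. - F \<theta> u)"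
  using Sm_cmult[of k U A F "-1"] by simp

lemma Sm_diff: "Sm k U A F \<Longrightarrow> Sm k U A G \<Longrightarrow> Sm k U A (\<lambda>\<theta> u. F \<theta> u - G \<theta> u)"
  using Sm_add[OF _ Sm_uminus, of k U A F G] by simp

lemma Sm_inverse: "Sm k U A F \<Longrightarrow> (\<And>\<theta> u. \<theta> \<in> U \<Longrightarrow> u \<in> A \<Longrightarrow> F \<theta> u \<noteq> 0)
   \<Longrightarrow> Sm k U A (\<lambda>\<theta> u. inverse (F \<theta> u))"
proof (induction k arbitrary: F)
  case 0
  have "continuous_on (U \<times> A) (\<lambda>x. inverse ((\<lambda>(\<theta>, u). F \<theta> u) x))"
    by (rule continuous_on_inverse[OF Sm_cont[OF 0(1)]]) (use 0(2) in auto)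
  then show ?case by (simp add: split_beta)
next
  case (Suc k)
  obtain Fp Fa Fb where
    F: "\<And>\<theta> u. \<theta> \<in> U \<Longrightarrow> u \<in> A \<Longrightarrow> ((\<lambda>\<theta>. F \<theta> u) has_derivative lin (Fp \<theta> u) (Fa \<theta> u) (Fb \<theta> u)) (at \<theta>)"
      "Sm k U A Fp" "Sm k U A Fa" "Sm k U A Fb" using SmE[OF Suc.prems(1)] by metis
  have Fk: "Sm k U A F" using Sm_mono[OF Suc.prems(1)] .
  have c: "continuous_on (U \<times> A) (\<lambda>(\<theta>, u). inverse (F \<theta> u))"
  proof -
    have "continuous_on (U \<times> A) (\<lambda>x. inverse ((\<lambda>(\<theta>, u). F \<theta> u) x))"
      by (rule continuous_on_inverse[OF Sm_cont[OF Suc.prems(1)]]) (use Suc.prems(2) in auto)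
    then show ?thesis by (simp add: split_beta)
  qed
  have d: "((\<lambda>\<theta>. inverse (F \<theta> u)) has_derivative
     lin (- (inverse (F \<theta> u) * Fp \<theta> u * inverse (F \<theta> u))) (- (inverse (F \<theta> u) * Fa \<theta> u * inverse (F \<theta> u)))
         (- (inverse (F \<theta> u) * Fb \<theta> u * inverse (F \<theta> u)))) (at \<theta>)"
    if "\<theta> \<in> U" "u \<in> A" for \<theta> u
    using Deriv.has_derivative_inverse[OF Suc.prems(2)[OF that] F(1)[OF that]]
    by (rule has_derivative_eq_rhs) (simp add: lin_def fun_eq_iff, algebra)
  have e: "Sm k U A (\<lambda>\<theta> u. - (inverse (F \<theta> u) * Fx \<theta> u * inverse (F \<theta> u)))"
    if "Sm k U A Fx" for Fx
    using Sm_uminus[OF Sm_mult[OF Sm_mult[OF Suc.IH[OF Fk Suc.prems(2)] that] Suc.IH[OF Fk Suc.prems(2)]]] .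
  show ?case by (rule SmI[OF c d e e e]) (use F in auto)
qed

lemma Sm_exp: "Sm k U A F \<Longrightarrow> Sm k U A (\<lambda>\<theta> u. exp (F \<theta> u))"
proof (induction k arbitrary: F)
  case 0
  have "continuous_on (U \<times> A) (\<lambda>x. exp ((\<lambda>(\<theta>, u). F \<theta> u) x))"
    by (rule continuous_on_exp[OF Sm_cont[OF 0(1)]])
  then show ?case by (simp add: split_beta)
next
  case (Suc k)
  obtain Fp Fa Fb where
    F: "\<And>\<theta> u. \<theta> \<in> U \<Longrightarrow> u \<in> A \<Longrightarrow> ((\<lambda>\<theta>. F \<theta> u) has_derivative lin (Fp \<theta> u) (Fa \<theta> u) (Fb \<theta> u)) (at \<theta>)"
      "Sm k U A Fp" "Sm k U A Fa" "Sm k U A Fb" using SmE[OF Suc.prems(1)] by metis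
  have Fk: "Sm k U A F" using Sm_mono[OF Suc.prems(1)] .
  have c: "continuous_on (U \<times> A) (\<lambda>(\<theta>, u). exp (F \<theta> u))"
  proof -
    have "continuous_on (U \<times> A) (\<lambda>x. exp ((\<lambda>(\<theta>, u). F \<theta> u) x))"
      by (rule continuous_on_exp[OF Sm_cont[OF Suc.prems(1)]])
    then show ?thesis by (simp add: split_beta)
  qed
  have d: "((\<lambda>\<theta>. exp (F \<theta> u)) has_derivative
     lin (exp (F \<theta> u) * Fp \<theta> u) (exp (F \<theta> u) * Fa \<theta> u) (exp (F \<theta> u) * Fb \<theta> u)) (at \<theta>)"
    if "\<theta> \<in> U" "u \<in> A" for \<theta> u
    using has_derivative_compose[OF F(1)[OF that] DERIV_exp[unfolded has_field_derivative_def]]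
    by (simp add: lin_def[abs_def] algebra_simps)
  have e: "Sm k U A (\<lambda>\<theta> u. exp (F \<theta> u) * Fx \<theta> u)"
    if "Sm k U A Fx" for Fx
    using Sm_mult[OF Suc.IH[OF Fk] that] .
  show ?case by (rule SmI[OF c d e e e]) (use F in auto)
qed

lemma Sm_lin_coord:
  assumes "bounded_linear (g :: param \<Rightarrow> real)" "\<And>d. g d = fst d * x + fst (snd d) * y + snd (snd d) * z"
  shows "Sm k U A (\<lambda>\<theta> u. complex_of_real (g \<theta>))"
proof (cases k)
  case 0
  have "continuous_on (U \<times> A) (\<lambda>(\<theta>, u). complex_of_real (g \<theta>))"
  proof -
    have cg: "continuous_on UNIV (\<lambda>\<theta>. complex_of_real (g \<theta>))"
      by (rule linear_continuous_on[OF bounded_linear_compose[OF bounded_linear_of_real assms(1)]])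
    have "continuous_on (U \<times> A) (\<lambda>x. complex_of_real (g (fst x)))"
      by (rule continuous_on_compose2[OF cg continuous_on_fst[OF continuous_on_id]]) auto
    then show ?thesis by (simp add: split_beta)
  qed
  then show ?thesis using 0 by simp
next
  case (Suc m)
  have c: "continuous_on (U \<times> A) (\<lambda>(\<theta>, u). complex_of_real (g \<theta>))"
  proof -
    have cg: "continuous_on UNIV (\<lambda>\<theta>. complex_of_real (g \<theta>))"
      by (rule linear_continuous_on[OF bounded_linear_compose[OF bounded_linear_of_real assms(1)]])
    have "continuous_on (U \<times> A) (\<lambda>x. complex_of_real (g (fst x)))"
      by (rule continuous_on_compose2[OF cg continuous_on_fst[OF continuous_on_id]]) auto
    then show ?thesis by (simp add: split_beta)
  qed
  have bl: "bounded_linear (\<lambda>\<theta>. complex_of_real (g \<theta>))"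
    by (rule bounded_linear_compose[OF bounded_linear_of_real assms(1)])
  have d: "((\<lambda>\<theta>. complex_of_real (g \<theta>)) has_derivative lin (of_real x) (of_real y) (of_real z)) (at \<theta>)" for \<theta>
  proof -
    have "lin (of_real x) (of_real y) (of_real z) = (\<lambda>\<theta>. complex_of_real (g \<theta>))"
      by (auto simp: lin_def fun_eq_iff assms(2) algebra_simps)
    then show ?thesis using bounded_linear_imp_has_derivative[OF bl] by simp
  qed
  show ?thesis unfolding Suc
    by (rule SmI[OF c d]) (auto intro!: Sm_const)
qed

lemma Sm_p: "Sm k U A (\<lambda>\<theta> u. complex_of_real (fst \<theta>))"
  by (rule Sm_lin_coord[where x=1 and y=0 and z=0]) (auto intro: bounded_linear_fst)
lemma Sm_a: "Sm k U A (\<lambda>\<theta> u. complex_of_real (fst (snd \<theta>)))"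
  by (rule Sm_lin_coord[where x=0 and y=1 and z=0])
     (auto intro: bounded_linear_compose[OF bounded_linear_fst bounded_linear_snd])
lemma Sm_b: "Sm k U A (\<lambda>\<theta> u. complex_of_real (snd (snd \<theta>)))"
  by (rule Sm_lin_coord[where x=0 and y=0 and z=1])
     (auto intro: bounded_linear_compose[OF bounded_linear_snd bounded_linear_snd])

lemma Sm_sum: "finite P \<Longrightarrow> (\<And>i. i \<in> P \<Longrightarrow> Sm k U A (F i)) \<Longrightarrow> Sm k U A (\<lambda>\<theta> u. \<Sum>i\<in>P. F i \<theta> u)"
proof (induction P rule: finite_induct)
  case empty
  then show ?case using Sm_const[of A "\<lambda>_. 0"] by simp
next
  case (insert x F)
  then show ?case by (simp add: Sm_add)
qed

definition U0 :: "param set" where "U0 = {\<theta>. 0 < fst \<theta> \<and> fst \<theta> < 1/2}"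

lemma open_U0: "open U0"
proof -
  have e: "U0 = fst -` {0<..<1/2}" by (auto simp: U0_def)
  show ?thesis unfolding e by (rule open_vimage[OF open_greaterThanLessThan continuous_on_fst[OF continuous_on_id]])
qed

lemma M_alt: "M \<theta> v = of_real (fst \<theta>) * exp ((\<i> * of_real v) * of_real (fst (snd \<theta>)))
   + (1 - of_real (fst \<theta>)) * exp ((\<i> * of_real v) * of_real (snd (snd \<theta>)))"
  by (cases \<theta>) (simp add: M_def algebra_simps)

lemma M_nonzero: assumes "\<theta> \<in> U0" shows "M \<theta> v \<noteq> 0"
proof -
  obtain p a b where t: "\<theta> = (p, a, b)" by (cases \<theta>)
  with assms have p: "0 < p" "p < 1/2" by (auto simp: U0_def)
  have n1: "norm (of_real p * exp (\<i> * of_real (v * a))) = p"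
    using p by (simp add: norm_mult norm_exp_i_times)
  have n2: "norm (of_real (1 - p) * exp (\<i> * of_real (v * b))) = 1 - p"
    using p by (simp only: norm_mult norm_exp_i_times norm_of_real) simp
  have "norm (of_real (1 - p) * exp (\<i> * of_real (v * b))) - norm (of_real p * exp (\<i> * of_real (v * a)))
      \<le> norm (of_real p * exp (\<i> * of_real (v * a)) + of_real (1 - p) * exp (\<i> * of_real (v * b)))"
    by (metis add.commute norm_diff_ineq)
  then have "1 - 2 * p \<le> norm (M \<theta> v)" using n1 n2 by (simp add: t M_def)
  then show ?thesis using p by auto
qed

lemma Sm_M: "continuous_on A s \<Longrightarrow> Sm k U A (\<lambda>\<theta> u. M \<theta> (s u))"
proof -
  assume s: "continuous_on A s"
  have cs: "continuous_on A (\<lambda>u. \<i> * complex_of_real (s u))"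
    by (intro continuous_intros s)
  have "Sm k U A (\<lambda>\<theta> u. of_real (fst \<theta>) * exp ((\<i> * of_real (s u)) * of_real (fst (snd \<theta>)))
   + (1 - of_real (fst \<theta>)) * exp ((\<i> * of_real (s u)) * of_real (snd (snd \<theta>))))"
    by (intro Sm_add Sm_mult Sm_p Sm_exp Sm_diff Sm_a Sm_b Sm_const continuous_intros s)
  then show ?thesis by (simp add: M_alt)
qed

lemma Sm_Zk: "Sm k U0 A (\<lambda>\<theta> u. Zk x \<theta> u)"
proof -
  have c1: "continuous_on A (\<lambda>u. exp (\<i> * complex_of_real (u * x)))"
    by (intro continuous_intros)
  have c2: "continuous_on A (\<lambda>u. exp (- \<i> * complex_of_real (u * x)))"
    by (intro continuous_intros)
  have "Sm k U0 A (\<lambda>\<theta> u. exp (\<i> * complex_of_real (u * x)) * inverse (M \<theta> u)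
        - exp (- \<i> * complex_of_real (u * x)) * inverse (M \<theta> (- u)))"
    by (intro Sm_diff Sm_mult Sm_const[OF c1] Sm_const[OF c2] Sm_inverse Sm_M[of A "\<lambda>u. u", simplified]
        Sm_M[of A "\<lambda>u. - u", simplified] continuous_intros M_nonzero)
  then show ?thesis by (simp add: Zk_def divide_inverse)
qed



lemma set_int_bound:
  fixes g :: "real \<Rightarrow> complex"
  assumes W: "finite_measure W" and A: "A \<in> sets W" and int: "set_integrable W A g"
    and e: "0 \<le> e" and b: "\<And>u. u \<in> A \<Longrightarrow> norm (g u) \<le> e"
  shows "norm (LINT u:A|W. g u) \<le> e * measure W A"
proof -
  have fin: "emeasure W A < \<infinity>" using finite_measure.emeasure_finite[OF W] by (simp add: less_top[symmetric])
  have "norm (LINT u:A|W. g u) = norm (integral\<^sup>L W (\<lambda>u. indicator A u *\<^sub>R g u))"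
    by (simp add: set_lebesgue_integral_def)
  also have "\<dots> \<le> integral\<^sup>L W (\<lambda>u. norm (indicator A u *\<^sub>R g u))"
    by (rule integral_norm_bound)
  also have "\<dots> \<le> integral\<^sup>L W (\<lambda>u. e * indicator A u)"
  proof (rule integral_mono)
    show "integrable W (\<lambda>u. norm (indicator A u *\<^sub>R g u))"
      using int unfolding set_integrable_def by (rule integrable_norm)
    show "integrable W (\<lambda>u. e * indicator A u)"
      using integrable_real_indicator[OF A fin] by (rule integrable_mult_right)
    show "norm (indicator A u *\<^sub>R g u) \<le> e * indicator A u" for u
      using b[of u] e by (cases "u \<in> A") auto
  qed
  also have "\<dots> = e * measure W A"
    using A fin by simp
  finally show ?thesis .
qed

lemma set_integrable_cont:
  fixes g :: "real \<Rightarrow> complex"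
  assumes W: "finite_measure W" "sets W = sets borel" and A: "compact A" and c: "continuous_on A g"
  shows "set_integrable W A g"
proof -
  have Ab: "A \<in> sets borel" using A by (simp add: compact_imp_closed borel_closed)
  have m: "(\<lambda>u. indicator A u *\<^sub>R g u) \<in> borel_measurable W"
  proof -
    have "(borel_measurable W :: (real \<Rightarrow> complex) set) = borel_measurable borel" by (rule measurable_cong_sets[OF W(2)]) simp
    then show ?thesis using borel_measurable_continuous_on_indicator[OF Ab c] by simp
  qed
  obtain B where B: "B > 0" "\<And>x. x \<in> g ` A \<Longrightarrow> norm x \<le> B"
    using compact_imp_bounded[OF compact_continuous_image[OF c A]] by (auto simp: bounded_pos)
  have "AE u in W. norm (indicator A u *\<^sub>R g u) \<le> B"
    using B by (intro AE_I2) (auto simp: indicator_def)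
  then show ?thesis unfolding set_integrable_def
    by (rule finite_measure.integrable_const_bound[OF W(1) _ m])
qed

lemma cont_slice:
  assumes "continuous_on (U \<times> A) (\<lambda>(\<theta>, u). F \<theta> u)" "\<theta> \<in> U"
  shows "continuous_on A (F \<theta>)"
proof -
  have "continuous_on A (\<lambda>u. (\<lambda>(\<theta>, u). F \<theta> u) (\<theta>, u))"
    by (rule continuous_on_compose2[OF assms(1)]) (use assms(2) in \<open>auto intro!: continuous_intros\<close>)
  then show ?thesis by simp
qed

lemma unif_near:
  fixes G :: "param \<times> real \<Rightarrow> complex"
  assumes c: "continuous_on (U \<times> A) G" and U: "open U" and A: "compact A" and t: "\<theta>0 \<in> U" and e: "e > 0"
  shows "\<exists>d>0. \<forall>\<theta>. dist \<theta> \<theta>0 < d \<longrightarrow> \<theta> \<in> U \<and> (\<forall>u\<in>A. norm (G (\<theta>, u) - G (\<theta>0, u)) < e)"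
proof -
  obtain r where r: "r > 0" "cball \<theta>0 r \<subseteq> U" using U t open_contains_cball by blast
  have K: "compact (cball \<theta>0 r \<times> A)" using A by (simp add: compact_Times)
  have "uniformly_continuous_on (cball \<theta>0 r \<times> A) G"
    by (rule compact_uniformly_continuous[OF continuous_on_subset[OF c] K]) (use r in auto)
  then obtain d' where d': "d' > 0" "\<And>x x'. x \<in> cball \<theta>0 r \<times> A \<Longrightarrow> x' \<in> cball \<theta>0 r \<times> A \<Longrightarrow>
      dist x' x < d' \<Longrightarrow> dist (G x') (G x) < e"
    unfolding uniformly_continuous_on_def using e by metis
  show ?thesis
  proof (intro exI[of _ "min d' r"] conjI allI impI ballI)
    show "min d' r > 0" using d' r by simp
    fix \<theta> assume h: "dist \<theta> \<theta>0 < min d' r"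
    then show "\<theta> \<in> U" using r by (auto simp: dist_commute)
    fix u assume u: "u \<in> A"
    have "dist (G (\<theta>, u)) (G (\<theta>0, u)) < e"
      by (rule d') (use h u r in \<open>auto simp: dist_Pair_Pair dist_commute\<close>)
    then show "norm (G (\<theta>, u) - G (\<theta>0, u)) < e" by (simp add: dist_norm)
  qed
qed



lemma int_cont:
  fixes W :: "real measure" and F :: "param \<Rightarrow> real \<Rightarrow> complex"
  assumes W: "finite_measure W" "sets W = sets borel" and U: "open U" and A: "compact A"
    and c: "continuous_on (U \<times> A) (\<lambda>(\<theta>, u). F \<theta> u)"
  shows "continuous_on U (\<lambda>\<theta>. LINT u:A|W. F \<theta> u)"
proof -
  have AW: "A \<in> sets W" using A W(2) by (simp add: compact_imp_closed borel_closed)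
  have int: "set_integrable W A (F \<theta>)" if "\<theta> \<in> U" for \<theta>
    by (rule set_integrable_cont[OF W A cont_slice[OF c that]])
  show ?thesis unfolding continuous_on_iff
  proof (intro ballI allI impI)
    fix \<theta>0 and e :: real assume t0: "\<theta>0 \<in> U" and e: "0 < e"
    define m where "m = measure W A"
    have m: "0 \<le> m" by (simp add: m_def)
    define e' where "e' = e / (m + 1)"
    have e': "e' > 0" using e m by (simp add: e'_def)
    obtain d where d: "d > 0" "\<And>\<theta>. dist \<theta> \<theta>0 < d \<Longrightarrow> \<theta> \<in> U \<and> (\<forall>u\<in>A. norm ((\<lambda>(\<theta>, u). F \<theta> u) (\<theta>, u) - (\<lambda>(\<theta>, u). F \<theta> u) (\<theta>0, u)) < e')"
      using unif_near[OF c U A t0 e'] by metis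
    show "\<exists>d>0. \<forall>x'\<in>U. dist x' \<theta>0 < d \<longrightarrow> dist (LINT u:A|W. F x' u) (LINT u:A|W. F \<theta>0 u) < e"
    proof (intro exI[of _ d] conjI ballI impI)
      fix \<theta> assume "\<theta> \<in> U" "dist \<theta> \<theta>0 < d"
      then have b: "\<forall>u\<in>A. norm (F \<theta> u - F \<theta>0 u) < e'" using d(2) by auto
      have "dist (LINT u:A|W. F \<theta> u) (LINT u:A|W. F \<theta>0 u) = norm (LINT u:A|W. F \<theta> u - F \<theta>0 u)"
        by (simp add: dist_norm set_integral_diff(2)[OF int int] \<open>\<theta> \<in> U\<close> t0)
      also have "\<dots> \<le> e' * m"
        unfolding m_def
        by (rule set_int_bound[OF W(1) AW set_integral_diff(1)[OF int int]])
           (use b e' \<open>\<theta> \<in> U\<close> t0 in \<open>auto simp: less_imp_le\<close>)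
      also have "\<dots> < e" using e m by (simp add: e'_def field_simps)
      finally show "dist (LINT u:A|W. F \<theta> u) (LINT u:A|W. F \<theta>0 u) < e" .
    qed (use d in auto)
  qed
qed

lemma set_integral_lin:
  fixes W :: "real measure"
  assumes ip: "set_integrable W A gp" and ia: "set_integrable W A ga" and ib: "set_integrable W A gb"
  shows "set_integrable W A (\<lambda>u. lin (gp u) (ga u) (gb u) h)"
    and "(LINT u:A|W. lin (gp u) (ga u) (gb u) h) = lin (LINT u:A|W. gp u) (LINT u:A|W. ga u) (LINT u:A|W. gb u) h"
proof -
  have i1: "set_integrable W A (\<lambda>u. of_real (fst h) * gp u)" by (rule set_integrable_mult_right[OF ip])
  have i2: "set_integrable W A (\<lambda>u. of_real (fst (snd h)) * ga u)" by (rule set_integrable_mult_right[OF ia])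
  have i3: "set_integrable W A (\<lambda>u. of_real (snd (snd h)) * gb u)" by (rule set_integrable_mult_right[OF ib])
  show "set_integrable W A (\<lambda>u. lin (gp u) (ga u) (gb u) h)"
    unfolding lin_def by (intro set_integral_add(1) i1 i2 i3)
  show "(LINT u:A|W. lin (gp u) (ga u) (gb u) h) = lin (LINT u:A|W. gp u) (LINT u:A|W. ga u) (LINT u:A|W. gb u) h"
    unfolding lin_def
    by (simp add: set_integral_add(2)[OF set_integral_add(1)[OF i1 i2] i3] set_integral_add(2)[OF i1 i2])
qed

lemma int_deriv:
  fixes W :: "real measure" and F Fp Fa Fb :: "param \<Rightarrow> real \<Rightarrow> complex"
  assumes W: "finite_measure W" "sets W = sets borel" and U: "open U" and A: "compact A"
    and c: "continuous_on (U \<times> A) (\<lambda>(\<theta>, u). F \<theta> u)"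
    and cp: "continuous_on (U \<times> A) (\<lambda>(\<theta>, u). Fp \<theta> u)"
    and ca: "continuous_on (U \<times> A) (\<lambda>(\<theta>, u). Fa \<theta> u)"
    and cb: "continuous_on (U \<times> A) (\<lambda>(\<theta>, u). Fb \<theta> u)"
    and der: "\<And>\<theta> u. \<theta> \<in> U \<Longrightarrow> u \<in> A \<Longrightarrow> ((\<lambda>\<theta>. F \<theta> u) has_derivative lin (Fp \<theta> u) (Fa \<theta> u) (Fb \<theta> u)) (at \<theta>)"
    and t0: "\<theta>0 \<in> U"
  shows "((\<lambda>\<theta>. LINT u:A|W. F \<theta> u) has_derivative
     lin (LINT u:A|W. Fp \<theta>0 u) (LINT u:A|W. Fa \<theta>0 u) (LINT u:A|W. Fb \<theta>0 u)) (at \<theta>0)"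
proof -
  have AW: "A \<in> sets W" using A W(2) by (simp add: compact_imp_closed borel_closed)
  have int: "set_integrable W A (F \<theta>)" if "\<theta> \<in> U" for \<theta>
    by (rule set_integrable_cont[OF W A cont_slice[OF c that]])
  have intp: "set_integrable W A (Fp \<theta>0)" by (rule set_integrable_cont[OF W A cont_slice[OF cp t0]])
  have inta: "set_integrable W A (Fa \<theta>0)" by (rule set_integrable_cont[OF W A cont_slice[OF ca t0]])
  have intb: "set_integrable W A (Fb \<theta>0)" by (rule set_integrable_cont[OF W A cont_slice[OF cb t0]])
  define m where "m = measure W A"
  have m: "0 \<le> m" by (simp add: m_def)
  let ?L = "lin (LINT u:A|W. Fp \<theta>0 u) (LINT u:A|W. Fa \<theta>0 u) (LINT u:A|W. Fb \<theta>0 u)"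
  let ?I = "\<lambda>\<theta>. LINT u:A|W. F \<theta> u"
  have lim: "((\<lambda>\<theta>. norm (?I \<theta> - ?I \<theta>0 - ?L (\<theta> - \<theta>0)) / norm (\<theta> - \<theta>0)) \<longlongrightarrow> 0) (at \<theta>0)"
    unfolding LIM_eq
  proof (intro allI impI)
    fix r :: real assume r: "0 < r"
    define e' where "e' = r / (3 * (m + 1))"
    have e': "e' > 0" using r m by (simp add: e'_def)
    obtain d1 where d1: "d1 > 0" "\<And>\<theta>. dist \<theta> \<theta>0 < d1 \<Longrightarrow> \<theta> \<in> U \<and> (\<forall>u\<in>A. norm ((\<lambda>(\<theta>, u). Fp \<theta> u) (\<theta>, u) - (\<lambda>(\<theta>, u). Fp \<theta> u) (\<theta>0, u)) < e')"
      using unif_near[OF cp U A t0 e'] by metis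
    obtain d2 where d2: "d2 > 0" "\<And>\<theta>. dist \<theta> \<theta>0 < d2 \<Longrightarrow> \<theta> \<in> U \<and> (\<forall>u\<in>A. norm ((\<lambda>(\<theta>, u). Fa \<theta> u) (\<theta>, u) - (\<lambda>(\<theta>, u). Fa \<theta> u) (\<theta>0, u)) < e')"
      using unif_near[OF ca U A t0 e'] by metis
    obtain d3 where d3: "d3 > 0" "\<And>\<theta>. dist \<theta> \<theta>0 < d3 \<Longrightarrow> \<theta> \<in> U \<and> (\<forall>u\<in>A. norm ((\<lambda>(\<theta>, u). Fb \<theta> u) (\<theta>, u) - (\<lambda>(\<theta>, u). Fb \<theta> u) (\<theta>0, u)) < e')"
      using unif_near[OF cb U A t0 e'] by metis
    define d where "d = min d1 (min d2 d3)"
    have d: "d > 0" using d1 d2 d3 by (simp add: d_def)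
    have inU: "x \<in> U" if "x \<in> ball \<theta>0 d" for x
      using that d1(2)[of x] by (auto simp: d_def dist_commute)
    have near: "norm (Fp x u - Fp \<theta>0 u) < e' \<and> norm (Fa x u - Fa \<theta>0 u) < e' \<and> norm (Fb x u - Fb \<theta>0 u) < e'"
      if "x \<in> ball \<theta>0 d" "u \<in> A" for x u
      using that d1(2)[of x] d2(2)[of x] d3(2)[of x] by (auto simp: d_def dist_commute)
    show "\<exists>s>0. \<forall>\<theta>. \<theta> \<noteq> \<theta>0 \<and> norm (\<theta> - \<theta>0) < s \<longrightarrow>
        norm (norm (?I \<theta> - ?I \<theta>0 - ?L (\<theta> - \<theta>0)) / norm (\<theta> - \<theta>0) - 0) < r"
    proof (intro exI[of _ d] conjI allI impI)
      show "d > 0" by (rule d)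
      fix \<theta> assume h: "\<theta> \<noteq> \<theta>0 \<and> norm (\<theta> - \<theta>0) < d"
      have tU: "\<theta> \<in> U" using h inU[of \<theta>] by (simp add: dist_norm norm_minus_commute)
      have nz: "norm (\<theta> - \<theta>0) > 0" using h by simp
      have pw: "norm (F \<theta> u - F \<theta>0 u - lin (Fp \<theta>0 u) (Fa \<theta>0 u) (Fb \<theta>0 u) (\<theta> - \<theta>0)) \<le> norm (\<theta> - \<theta>0) * (3 * e')"
        if u: "u \<in> A" for u
      proof (rule differentiable_bound_linearization[where S="ball \<theta>0 d" and f="\<lambda>\<theta>. F \<theta> u"
            and f'="\<lambda>x. lin (Fp x u) (Fa x u) (Fb x u)"])
        fix t :: real assume "t \<in> {0..1}"
        then have "\<bar>t\<bar> * norm (\<theta> - \<theta>0) \<le> norm (\<theta> - \<theta>0)" by (auto intro: mult_left_le_one_le)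
        then have "\<bar>t\<bar> * norm (\<theta> - \<theta>0) < d" using h by linarith
        then show "\<theta>0 + t *\<^sub>R (\<theta> - \<theta>0) \<in> ball \<theta>0 d" by (simp add: dist_norm)
      next
        fix x assume "x \<in> ball \<theta>0 d"
        then show "((\<lambda>\<theta>. F \<theta> u) has_derivative lin (Fp x u) (Fa x u) (Fb x u)) (at x within ball \<theta>0 d)"
          using der[OF inU u] has_derivative_at_withinI by blast
      next
        fix x assume x: "x \<in> ball \<theta>0 d"
        show "onorm (lin (Fp x u) (Fa x u) (Fb x u) - lin (Fp \<theta>0 u) (Fa \<theta>0 u) (Fb \<theta>0 u)) \<le> 3 * e'"
        proof (rule onorm_le)
          fix h
          have "norm ((lin (Fp x u) (Fa x u) (Fb x u) - lin (Fp \<theta>0 u) (Fa \<theta>0 u) (Fb \<theta>0 u)) h)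
              = norm (lin (Fp x u - Fp \<theta>0 u) (Fa x u - Fa \<theta>0 u) (Fb x u - Fb \<theta>0 u) h)"
            by (simp add: lin_diff)
          also have "\<dots> \<le> (norm (Fp x u - Fp \<theta>0 u) + norm (Fa x u - Fa \<theta>0 u) + norm (Fb x u - Fb \<theta>0 u)) * norm h"
            by (rule norm_lin)
          also have "\<dots> \<le> (3 * e') * norm h"
            using near[OF x u] by (intro mult_right_mono) auto
          finally show "norm ((lin (Fp x u) (Fa x u) (Fb x u) - lin (Fp \<theta>0 u) (Fa \<theta>0 u) (Fb \<theta>0 u)) h) \<le> 3 * e' * norm h" .
        qed
      qed (use d in auto)
      have il: "set_integrable W A (\<lambda>u. lin (Fp \<theta>0 u) (Fa \<theta>0 u) (Fb \<theta>0 u) (\<theta> - \<theta>0))"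
        by (rule set_integral_lin(1)[OF intp inta intb])
      have "?I \<theta> - ?I \<theta>0 - ?L (\<theta> - \<theta>0) = (LINT u:A|W. F \<theta> u - F \<theta>0 u - lin (Fp \<theta>0 u) (Fa \<theta>0 u) (Fb \<theta>0 u) (\<theta> - \<theta>0))"
        by (simp add: set_integral_diff(2)[OF set_integral_diff(1)[OF int int] il] set_integral_diff(2)[OF int int]
            set_integral_lin(2)[OF intp inta intb] tU t0)
      also have "norm \<dots> \<le> norm (\<theta> - \<theta>0) * (3 * e') * m"
        unfolding m_def
        by (rule set_int_bound[OF W(1) AW set_integral_diff(1)[OF set_integral_diff(1)[OF int int] il]])
           (use pw e' tU t0 in auto)
      finally have "norm (?I \<theta> - ?I \<theta>0 - ?L (\<theta> - \<theta>0)) / norm (\<theta> - \<theta>0) \<le> 3 * e' * m"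
        using nz by (simp add: divide_le_eq algebra_simps)
      also have "\<dots> < r" using r m by (simp add: e'_def field_simps)
      finally show "norm (norm (?I \<theta> - ?I \<theta>0 - ?L (\<theta> - \<theta>0)) / norm (\<theta> - \<theta>0) - 0) < r" by simp
    qed
  qed
  show ?thesis unfolding has_derivative_iff_norm using bounded_linear_lin lim by blast
qed



lemma Sm_integral:
  fixes W :: "real measure" and F :: "param \<Rightarrow> real \<Rightarrow> complex"
  assumes W: "finite_measure W" "sets W = sets borel" and U: "open U" and A: "compact A"
  shows "Sm k U A F \<Longrightarrow> Sm k U UNIV (\<lambda>\<theta> _. LINT u:A|W. F \<theta> u)"
proof (induction k arbitrary: F)
  case 0
  have "continuous_on (U \<times> UNIV) (\<lambda>x. (\<lambda>\<theta>. LINT u:A|W. F \<theta> u) (fst x))"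
    by (rule continuous_on_compose2[OF int_cont[OF W U A Sm_cont[OF 0]] continuous_on_fst[OF continuous_on_id]]) auto
  then show ?case by (simp add: split_beta)
next
  case (Suc k)
  obtain Fp Fa Fb where
    c: "continuous_on (U \<times> A) (\<lambda>(\<theta>, u). F \<theta> u)" and
    F: "\<And>\<theta> u. \<theta> \<in> U \<Longrightarrow> u \<in> A \<Longrightarrow> ((\<lambda>\<theta>. F \<theta> u) has_derivative lin (Fp \<theta> u) (Fa \<theta> u) (Fb \<theta> u)) (at \<theta>)"
      "Sm k U A Fp" "Sm k U A Fa" "Sm k U A Fb" using SmE[OF Suc.prems(1)] by metis
  have c': "continuous_on (U \<times> UNIV) (\<lambda>(\<theta>, u::real). LINT u:A|W. F \<theta> u)"
  proof -
    have "continuous_on (U \<times> UNIV) (\<lambda>x. (\<lambda>\<theta>. LINT u:A|W. F \<theta> u) (fst x))"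
      by (rule continuous_on_compose2[OF int_cont[OF W U A c] continuous_on_fst[OF continuous_on_id]]) auto
    then show ?thesis by (simp add: split_beta)
  qed
  show ?case
    by (rule SmI[OF c' _ Suc.IH[OF F(2)] Suc.IH[OF F(3)] Suc.IH[OF F(4)]])
       (rule int_deriv[OF W U A c Sm_cont[OF F(2)] Sm_cont[OF F(3)] Sm_cont[OF F(4)] F(1)])
qed

lemma bound_compact:
  fixes g :: "param \<Rightarrow> complex"
  assumes "continuous_on U g" "compact C" "C \<subseteq> U"
  shows "\<exists>B\<ge>0. \<forall>x\<in>C. norm (g x) \<le> B"
proof -
  have "compact (g ` C)" by (rule compact_continuous_image[OF continuous_on_subset[OF assms(1,3)] assms(2)])
  then obtain B where "B > 0" "\<forall>x\<in>g ` C. norm x \<le> B" using compact_imp_bounded bounded_pos by metis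
  then show ?thesis by (intro exI[of _ B]) auto
qed

lemma cont_slice0:
  assumes "continuous_on (U \<times> UNIV) (\<lambda>(\<theta>, u::real). F \<theta> u)"
  shows "continuous_on U (\<lambda>\<theta>. F \<theta> 0)"
proof -
  have "continuous_on U (\<lambda>\<theta>. (\<lambda>(\<theta>, u). F \<theta> u) (\<theta>, 0))"
    by (rule continuous_on_compose2[OF assms]) (auto intro!: continuous_intros)
  then show ?thesis by simp
qed

lemma Sm_lipschitz:
  fixes G :: "param \<Rightarrow> real \<Rightarrow> complex"
  assumes S: "Sm (Suc k) U UNIV G" and U: "open U" and K: "compact K" "K \<subseteq> U"
  shows "\<exists>C. C-lipschitz_on K (\<lambda>\<theta>. G \<theta> 0)"
proof -
  define I where "I = (\<lambda>\<theta>. G \<theta> 0)"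
  obtain Fp Fa Fb where
    F0: "\<And>\<theta> u. \<theta> \<in> U \<Longrightarrow> ((\<lambda>\<theta>. G \<theta> u) has_derivative lin (Fp \<theta> u) (Fa \<theta> u) (Fb \<theta> u)) (at \<theta>)"
    and F: "Sm k U UNIV Fp" "Sm k U UNIV Fa" "Sm k U UNIV Fb" using SmE[OF S] by (metis UNIV_I)
  have F1: "((\<lambda>\<theta>. I \<theta>) has_derivative lin (Fp \<theta> 0) (Fa \<theta> 0) (Fb \<theta> 0)) (at \<theta>)" if "\<theta> \<in> U" for \<theta>
    using F0[OF that, of 0] by (simp add: I_def)
  have ll: "local_lipschitz {0::real} K (\<lambda>t. I)"
    unfolding local_lipschitz_def
  proof (intro ballI)
    fix x and t :: real assume x: "x \<in> K" and "t \<in> {0}"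
    obtain r where r: "r > 0" "cball x r \<subseteq> U" using U K x open_contains_cball by blast
    obtain Bp where Bp: "Bp \<ge> 0" "\<forall>y\<in>cball x r. norm (Fp y 0) \<le> Bp"
      using bound_compact[OF cont_slice0[OF Sm_cont[OF F(1)]] compact_cball r(2)] by blast
    obtain Ba where Ba: "Ba \<ge> 0" "\<forall>y\<in>cball x r. norm (Fa y 0) \<le> Ba"
      using bound_compact[OF cont_slice0[OF Sm_cont[OF F(2)]] compact_cball r(2)] by blast
    obtain Bb where Bb: "Bb \<ge> 0" "\<forall>y\<in>cball x r. norm (Fb y 0) \<le> Bb"
      using bound_compact[OF cont_slice0[OF Sm_cont[OF F(3)]] compact_cball r(2)] by blast
    have lip: "(Bp + Ba + Bb)-lipschitz_on (cball x r \<inter> K) I"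
    proof (rule lipschitz_onI)
      fix y z assume y: "y \<in> cball x r \<inter> K" and z: "z \<in> cball x r \<inter> K"
      have "norm (I y - I z) \<le> (Bp + Ba + Bb) * norm (y - z)"
      proof (rule differentiable_bound[OF convex_cball, where f'="\<lambda>y. lin (Fp y 0) (Fa y 0) (Fb y 0)"])
        fix w assume w: "w \<in> cball x r"
        then show "(I has_derivative lin (Fp w 0) (Fa w 0) (Fb w 0)) (at w within cball x r)"
          using F1[of w] r(2) has_derivative_at_withinI by blast
        show "onorm (lin (Fp w 0) (Fa w 0) (Fb w 0)) \<le> Bp + Ba + Bb"
        proof (rule onorm_le)
          fix h
          have "norm (lin (Fp w 0) (Fa w 0) (Fb w 0) h) \<le> (norm (Fp w 0) + norm (Fa w 0) + norm (Fb w 0)) * norm h"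
            by (rule norm_lin)
          also have "\<dots> \<le> (Bp + Ba + Bb) * norm h"
            using Bp Ba Bb w by (intro mult_right_mono add_mono) auto
          finally show "norm (lin (Fp w 0) (Fa w 0) (Fb w 0) h) \<le> (Bp + Ba + Bb) * norm h" .
        qed
      qed (use y z in auto)
      then show "dist (I y) (I z) \<le> (Bp + Ba + Bb) * dist y z" by (simp add: dist_norm)
    qed (use Bp Ba Bb in auto)
    show "\<exists>u>0. \<exists>L. \<forall>t\<in>cball t u \<inter> {0}. L-lipschitz_on (cball x u \<inter> K) I"
      using r(1) lip by blast
  qed
  obtain L where "\<And>t. t \<in> {0::real} \<Longrightarrow> L-lipschitz_on K I"
    using local_lipschitz_compact_implies_lipschitz[OF ll K(1)] by auto
  then show ?thesis unfolding I_def by blast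
qed



definition L3 :: "complex \<Rightarrow> complex \<Rightarrow> complex \<Rightarrow> param \<Rightarrow>\<^sub>L complex" where
  "L3 x y z = Blinfun (lin x y z)"

lemma L3_apply: "blinfun_apply (L3 x y z) = lin x y z"
  unfolding L3_def by (rule bounded_linear_Blinfun_apply[OF bounded_linear_lin])

lemma norm_L3: "norm (L3 x y z) \<le> norm x + norm y + norm z"
  by (rule norm_blinfun_bound) (auto simp: L3_apply norm_lin)

lemma L3_diff: "L3 x y z - L3 x' y' z' = L3 (x - x') (y - y') (z - z')"
  by (rule blinfun_eqI) (simp add: L3_apply lin_diff minus_blinfun.rep_eq)

lemma bl_L3: "bounded_linear (\<lambda>v::complex \<times> complex \<times> complex. L3 (fst v) (fst (snd v)) (snd (snd v)))"
proof (rule bounded_linear_intro[where K=3])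
  fix v w :: "complex \<times> complex \<times> complex"
  show "L3 (fst (v + w)) (fst (snd (v + w))) (snd (snd (v + w))) =
        L3 (fst v) (fst (snd v)) (snd (snd v)) + L3 (fst w) (fst (snd w)) (snd (snd w))"
    by (rule blinfun_eqI) (simp add: L3_apply lin_add plus_blinfun.rep_eq)
next
  fix r :: real and v :: "complex \<times> complex \<times> complex"
  show "L3 (fst (r *\<^sub>R v)) (fst (snd (r *\<^sub>R v))) (snd (snd (r *\<^sub>R v))) = r *\<^sub>R L3 (fst v) (fst (snd v)) (snd (snd v))"
    by (rule blinfun_eqI) (simp add: L3_apply lin_def scaleR_conv_of_real algebra_simps scaleR_blinfun.rep_eq)
next
  fix v :: "complex \<times> complex \<times> complex"
  have "norm (fst v) \<le> norm v" "norm (fst (snd v)) \<le> norm v" "norm (snd (snd v)) \<le> norm v"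
    by (metis norm_fst_le prod.collapse, metis norm_fst_le norm_snd_le order_trans prod.collapse,
        metis norm_snd_le order_trans prod.collapse)
  then show "norm (L3 (fst v) (fst (snd v)) (snd (snd v))) \<le> norm v * 3"
    using norm_L3[of "fst v" "fst (snd v)" "snd (snd v)"] by linarith
qed

lemma bl_H: "bounded_linear (\<lambda>h. L3 (lin a b c h) (lin d e f h) (lin g k l h))"
proof -
  have "bounded_linear (\<lambda>h. (\<lambda>v. L3 (fst v) (fst (snd v)) (snd (snd v))) (lin a b c h, lin d e f h, lin g k l h))"
    by (rule bounded_linear_compose[OF bl_L3])
       (intro bounded_linear_Pair bounded_linear_lin)
  then show ?thesis by simp
qed

definition H9 where
  "H9 a b c d e f g k l = Blinfun (\<lambda>h. L3 (lin a b c h) (lin d e f h) (lin g k l h))"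

lemma H9_apply: "blinfun_apply (H9 a b c d e f g k l) = (\<lambda>h. L3 (lin a b c h) (lin d e f h) (lin g k l h))"
  unfolding H9_def by (rule bounded_linear_Blinfun_apply[OF bl_H])

lemma norm_H9_diff:
  "norm (H9 a b c d e f g k l - H9 a' b' c' d' e' f' g' k' l') \<le>
     norm (a - a') + norm (b - b') + norm (c - c') + norm (d - d') + norm (e - e') + norm (f - f')
     + norm (g - g') + norm (k - k') + norm (l - l')"
proof (rule norm_blinfun_bound)
  fix h
  have "blinfun_apply (H9 a b c d e f g k l - H9 a' b' c' d' e' f' g' k' l') h
     = L3 (lin (a - a') (b - b') (c - c') h) (lin (d - d') (e - e') (f - f') h) (lin (g - g') (k - k') (l - l') h)"
    by (simp add: H9_apply L3_diff lin_diff minus_blinfun.rep_eq)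
  also have "norm \<dots> \<le> norm (lin (a - a') (b - b') (c - c') h) + norm (lin (d - d') (e - e') (f - f') h)
      + norm (lin (g - g') (k - k') (l - l') h)" by (rule norm_L3)
  also have "\<dots> \<le> (norm (a - a') + norm (b - b') + norm (c - c')) * norm h
     + (norm (d - d') + norm (e - e') + norm (f - f')) * norm h
     + (norm (g - g') + norm (k - k') + norm (l - l')) * norm h"
    by (intro add_mono norm_lin)
  finally show "norm (blinfun_apply (H9 a b c d e f g k l - H9 a' b' c' d' e' f' g' k' l') h) \<le>
     (norm (a - a') + norm (b - b') + norm (c - c') + norm (d - d') + norm (e - e') + norm (f - f')
     + norm (g - g') + norm (k - k') + norm (l - l')) * norm h" by (simp add: algebra_simps)
qed simp

lemma lip_dist: "C-lipschitz_on K g \<Longrightarrow> x \<in> K \<Longrightarrow> y \<in> K \<Longrightarrow> norm (g x - g y) \<le> C * norm (x - y)"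
  using lipschitz_onD[of C K g x y] by (simp add: dist_norm)

lemma hessian_part:
  fixes G :: "param \<Rightarrow> real \<Rightarrow> complex" and I :: "param \<Rightarrow> complex"
  assumes S: "Sm 3 U UNIV G" and GI: "\<And>\<theta>. G \<theta> 0 = I \<theta>" and U: "open U" and K: "compact K" "K \<subseteq> U"
  shows "\<exists>(DS :: param \<Rightarrow> param \<Rightarrow>\<^sub>L complex) (HS :: param \<Rightarrow> param \<Rightarrow>\<^sub>L (param \<Rightarrow>\<^sub>L complex)).
            (\<forall>\<theta> \<in> U. (I has_derivative blinfun_apply (DS \<theta>)) (at \<theta>) \<and>
               (DS has_derivative blinfun_apply (HS \<theta>)) (at \<theta>)) \<and>
            (\<exists>C. C-lipschitz_on K HS)"
proof -
  obtain Ip Ia Ib where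
    dI: "\<And>\<theta> u. \<theta> \<in> U \<Longrightarrow> ((\<lambda>\<theta>. G \<theta> u) has_derivative lin (Ip \<theta> u) (Ia \<theta> u) (Ib \<theta> u)) (at \<theta>)"
    and S2: "Sm 2 U UNIV Ip" "Sm 2 U UNIV Ia" "Sm 2 U UNIV Ib"
    using SmE[OF S[unfolded numeral_3_eq_3]] by (metis UNIV_I numeral_2_eq_2)
  obtain Ipp Ipa Ipb where
    dp: "\<And>\<theta> u. \<theta> \<in> U \<Longrightarrow> ((\<lambda>\<theta>. Ip \<theta> u) has_derivative lin (Ipp \<theta> u) (Ipa \<theta> u) (Ipb \<theta> u)) (at \<theta>)"
    and Sp: "Sm 1 U UNIV Ipp" "Sm 1 U UNIV Ipa" "Sm 1 U UNIV Ipb"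
    using SmE[OF S2(1)[unfolded numeral_2_eq_2]] by (metis UNIV_I One_nat_def)
  obtain Iap Iaa Iab where
    da: "\<And>\<theta> u. \<theta> \<in> U \<Longrightarrow> ((\<lambda>\<theta>. Ia \<theta> u) has_derivative lin (Iap \<theta> u) (Iaa \<theta> u) (Iab \<theta> u)) (at \<theta>)"
    and Sa: "Sm 1 U UNIV Iap" "Sm 1 U UNIV Iaa" "Sm 1 U UNIV Iab"
    using SmE[OF S2(2)[unfolded numeral_2_eq_2]] by (metis UNIV_I One_nat_def)
  obtain Ibp Iba Ibb where
    db: "\<And>\<theta> u. \<theta> \<in> U \<Longrightarrow> ((\<lambda>\<theta>. Ib \<theta> u) has_derivative lin (Ibp \<theta> u) (Iba \<theta> u) (Ibb \<theta> u)) (at \<theta>)"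
    and Sb: "Sm 1 U UNIV Ibp" "Sm 1 U UNIV Iba" "Sm 1 U UNIV Ibb"
    using SmE[OF S2(3)[unfolded numeral_2_eq_2]] by (metis UNIV_I One_nat_def)
  define DS where "DS \<theta> = L3 (Ip \<theta> 0) (Ia \<theta> 0) (Ib \<theta> 0)" for \<theta>
  define HS where "HS \<theta> = H9 (Ipp \<theta> 0) (Ipa \<theta> 0) (Ipb \<theta> 0) (Iap \<theta> 0) (Iaa \<theta> 0) (Iab \<theta> 0)
      (Ibp \<theta> 0) (Iba \<theta> 0) (Ibb \<theta> 0)" for \<theta>
  have d1: "(I has_derivative blinfun_apply (DS \<theta>)) (at \<theta>)" if "\<theta> \<in> U" for \<theta>
    using dI[OF that, of 0] by (simp add: GI DS_def L3_apply)
  have d2: "(DS has_derivative blinfun_apply (HS \<theta>)) (at \<theta>)" if "\<theta> \<in> U" for \<theta>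
  proof -
    have "((\<lambda>\<theta>. (\<lambda>v. L3 (fst v) (fst (snd v)) (snd (snd v))) (Ip \<theta> 0, Ia \<theta> 0, Ib \<theta> 0)) has_derivative
        (\<lambda>h. (\<lambda>v. L3 (fst v) (fst (snd v)) (snd (snd v)))
           (lin (Ipp \<theta> 0) (Ipa \<theta> 0) (Ipb \<theta> 0) h, lin (Iap \<theta> 0) (Iaa \<theta> 0) (Iab \<theta> 0) h,
            lin (Ibp \<theta> 0) (Iba \<theta> 0) (Ibb \<theta> 0) h))) (at \<theta>)"
      by (rule bounded_linear.has_derivative[OF bl_L3])
         (intro has_derivative_Pair dp[OF that] da[OF that] db[OF that])
    then show ?thesis
      by (simp add: DS_def[abs_def] HS_def H9_apply)
  qed
  obtain C1 where C1: "C1-lipschitz_on K (\<lambda>\<theta>. Ipp \<theta> 0)" using Sm_lipschitz[OF Sp(1)[unfolded One_nat_def] U K] by blast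
  obtain C2 where C2: "C2-lipschitz_on K (\<lambda>\<theta>. Ipa \<theta> 0)" using Sm_lipschitz[OF Sp(2)[unfolded One_nat_def] U K] by blast
  obtain C3 where C3: "C3-lipschitz_on K (\<lambda>\<theta>. Ipb \<theta> 0)" using Sm_lipschitz[OF Sp(3)[unfolded One_nat_def] U K] by blast
  obtain C4 where C4: "C4-lipschitz_on K (\<lambda>\<theta>. Iap \<theta> 0)" using Sm_lipschitz[OF Sa(1)[unfolded One_nat_def] U K] by blast
  obtain C5 where C5: "C5-lipschitz_on K (\<lambda>\<theta>. Iaa \<theta> 0)" using Sm_lipschitz[OF Sa(2)[unfolded One_nat_def] U K] by blast
  obtain C6 where C6: "C6-lipschitz_on K (\<lambda>\<theta>. Iab \<theta> 0)" using Sm_lipschitz[OF Sa(3)[unfolded One_nat_def] U K] by blast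
  obtain C7 where C7: "C7-lipschitz_on K (\<lambda>\<theta>. Ibp \<theta> 0)" using Sm_lipschitz[OF Sb(1)[unfolded One_nat_def] U K] by blast
  obtain C8 where C8: "C8-lipschitz_on K (\<lambda>\<theta>. Iba \<theta> 0)" using Sm_lipschitz[OF Sb(2)[unfolded One_nat_def] U K] by blast
  obtain C9 where C9: "C9-lipschitz_on K (\<lambda>\<theta>. Ibb \<theta> 0)" using Sm_lipschitz[OF Sb(3)[unfolded One_nat_def] U K] by blast
  have lipHS: "(C1 + C2 + C3 + C4 + C5 + C6 + C7 + C8 + C9)-lipschitz_on K HS"
  proof (rule lipschitz_onI)
    fix x y assume x: "x \<in> K" and y: "y \<in> K"
    have "norm (HS x - HS y) \<le> C1 * norm (x - y) + C2 * norm (x - y) + C3 * norm (x - y) + C4 * norm (x - y)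
       + C5 * norm (x - y) + C6 * norm (x - y) + C7 * norm (x - y) + C8 * norm (x - y) + C9 * norm (x - y)"
      unfolding HS_def
      by (rule order_trans[OF norm_H9_diff])
         (intro add_mono lip_dist[OF C1 x y] lip_dist[OF C2 x y] lip_dist[OF C3 x y] lip_dist[OF C4 x y]
           lip_dist[OF C5 x y] lip_dist[OF C6 x y] lip_dist[OF C7 x y] lip_dist[OF C8 x y] lip_dist[OF C9 x y])
    then show "dist (HS x) (HS y) \<le> (C1 + C2 + C3 + C4 + C5 + C6 + C7 + C8 + C9) * dist x y"
      by (simp add: dist_norm algebra_simps)
  next
    show "0 \<le> C1 + C2 + C3 + C4 + C5 + C6 + C7 + C8 + C9"
      using lipschitz_on_nonneg[OF C1] lipschitz_on_nonneg[OF C2] lipschitz_on_nonneg[OF C3]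
        lipschitz_on_nonneg[OF C4] lipschitz_on_nonneg[OF C5] lipschitz_on_nonneg[OF C6]
        lipschitz_on_nonneg[OF C7] lipschitz_on_nonneg[OF C8] lipschitz_on_nonneg[OF C9] by linarith
  qed
  show ?thesis using d1 d2 lipHS by blast
qed



lemma exp_diff_le: "cmod (exp (\<i> * of_real x) - exp (\<i> * of_real y)) \<le> \<bar>x - y\<bar>"
proof -
  have "exp (\<i> * of_real x) - exp (\<i> * of_real y) = exp (\<i> * of_real y) * (exp (\<i> * of_real (x - y)) - 1)"
    by (simp add: algebra_simps exp_diff[symmetric] exp_add[symmetric])
  then have "cmod (exp (\<i> * of_real x) - exp (\<i> * of_real y)) = cmod (exp (\<i> * of_real (x - y)) - 1)"
    by (simp add: norm_mult norm_exp_i_times)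
  also have "\<dots> \<le> \<bar>x - y\<bar>" using iexp_approx1[of "x - y" 0] by simp
  finally show ?thesis .
qed

lemma M_lip:
  assumes "0 \<le> fst \<theta>'" "fst \<theta>' \<le> 1"
  shows "cmod (M \<theta> v - M \<theta>' v) \<le> (2 + 2 * \<bar>v\<bar>) * norm (\<theta> - \<theta>')"
proof -
  obtain p a b where t: "\<theta> = (p, a, b)" by (cases \<theta>)
  obtain p' a' b' where t': "\<theta>' = (p', a', b')" by (cases \<theta>')
  have pp: "0 \<le> p'" "p' \<le> 1" using assms t' by auto
  define ea where "ea = exp (\<i> * of_real (v * a))"
  define ea' where "ea' = exp (\<i> * of_real (v * a'))"
  define eb where "eb = exp (\<i> * of_real (v * b))"
  define eb' where "eb' = exp (\<i> * of_real (v * b'))"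
  have nea: "cmod ea = 1" "cmod eb = 1" by (simp_all add: ea_def eb_def norm_exp_i_times)
  have da: "cmod (ea - ea') \<le> \<bar>v\<bar> * \<bar>a - a'\<bar>"
    using exp_diff_le[of "v * a" "v * a'"] by (simp add: ea_def ea'_def right_diff_distrib[symmetric] abs_mult)
  have db: "cmod (eb - eb') \<le> \<bar>v\<bar> * \<bar>b - b'\<bar>"
    using exp_diff_le[of "v * b" "v * b'"] by (simp add: eb_def eb'_def right_diff_distrib[symmetric] abs_mult)
  have "M \<theta> v - M \<theta>' v = of_real (p - p') * ea + of_real p' * (ea - ea') + of_real (p' - p) * eb
      + of_real (1 - p') * (eb - eb')"
    by (simp add: t t' M_def ea_def ea'_def eb_def eb'_def algebra_simps)
  also have "cmod \<dots> \<le> \<bar>p - p'\<bar> + p' * (\<bar>v\<bar> * \<bar>a - a'\<bar>) + \<bar>p - p'\<bar> + (1 - p') * (\<bar>v\<bar> * \<bar>b - b'\<bar>)"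
  proof -
    have "cmod (of_real (p - p') * ea + of_real p' * (ea - ea') + of_real (p' - p) * eb
      + of_real (1 - p') * (eb - eb')) \<le> cmod (of_real (p - p') * ea) + cmod (of_real p' * (ea - ea'))
        + cmod (of_real (p' - p) * eb) + cmod (of_real (1 - p') * (eb - eb'))"
      by (rule order_trans[OF norm_triangle_ineq] add_mono)+ auto
    also have "\<dots> \<le> \<bar>p - p'\<bar> + p' * (\<bar>v\<bar> * \<bar>a - a'\<bar>) + \<bar>p - p'\<bar> + (1 - p') * (\<bar>v\<bar> * \<bar>b - b'\<bar>)"
    proof -
      have h1: "cmod (complex_of_real p' - complex_of_real p) = \<bar>p - p'\<bar>"
        by (metis of_real_diff norm_of_real abs_minus_commute)
      have h2: "cmod (1 - complex_of_real p') = 1 - p'"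
        using pp by (metis of_real_1 of_real_diff norm_of_real abs_of_nonneg diff_ge_0_iff_ge)
      show ?thesis
        using pp da db nea by (intro add_mono) (auto simp: norm_mult h1 h2 intro: mult_left_mono)
    qed
    finally show ?thesis .
  qed
  also have "\<dots> \<le> norm (\<theta> - \<theta>') + 1 * (\<bar>v\<bar> * norm (\<theta> - \<theta>')) + norm (\<theta> - \<theta>') + 1 * (\<bar>v\<bar> * norm (\<theta> - \<theta>'))"
  proof -
    have n1: "\<bar>p - p'\<bar> \<le> norm (\<theta> - \<theta>')"
      using norm_fst_le[of "p - p'" "(a - a', b - b')"] by (simp add: t t')
    have n2: "\<bar>a - a'\<bar> \<le> norm (\<theta> - \<theta>')"
      using norm_fst_le[of "a - a'" "b - b'"] norm_snd_le[of "(a - a', b - b')" "p - p'"] by (simp add: t t')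
    have n3: "\<bar>b - b'\<bar> \<le> norm (\<theta> - \<theta>')"
      using norm_snd_le[of "b - b'" "a - a'"] norm_snd_le[of "(a - a', b - b')" "p - p'"] by (simp add: t t')
    show ?thesis using pp
      by (intro add_mono n1 mult_mono mult_left_mono n2 n3) auto
  qed
  also have "\<dots> = (2 + 2 * \<bar>v\<bar>) * norm (\<theta> - \<theta>')" by (simp add: algebra_simps)
  finally show ?thesis .
qed

lemma M_lower:
  assumes "0 < fst \<theta>" "fst \<theta> \<le> q"
  shows "1 - 2 * q \<le> cmod (M \<theta> v)"
proof -
  obtain p a b where t: "\<theta> = (p, a, b)" by (cases \<theta>)
  with assms have p: "0 < p" "p \<le> q" by auto
  have n1: "norm (of_real p * exp (\<i> * of_real (v * a))) = p"
    using p by (simp add: norm_mult norm_exp_i_times)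
  have n2: "norm (of_real (1 - p) * exp (\<i> * of_real (v * b))) = \<bar>1 - p\<bar>"
    by (simp only: norm_mult norm_exp_i_times norm_of_real) simp
  have "norm (of_real (1 - p) * exp (\<i> * of_real (v * b))) - norm (of_real p * exp (\<i> * of_real (v * a)))
      \<le> norm (of_real p * exp (\<i> * of_real (v * a)) + of_real (1 - p) * exp (\<i> * of_real (v * b)))"
    by (metis add.commute norm_diff_ineq)
  then have "\<bar>1 - p\<bar> - p \<le> norm (M \<theta> v)" using n1 n2 by (simp add: t M_def)
  then show ?thesis using p by linarith
qed

lemma M_cont: "continuous_on UNIV (M \<theta>)"
  unfolding M_alt[abs_def] by (intro continuous_intros)

lemma M_meas[measurable]: "M \<theta> \<in> borel_measurable borel"
  by (rule borel_measurable_continuous_onI[OF M_cont])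

lemma fourier_meas:
  assumes g: "g \<in> borel_measurable borel"
  shows "fourier g \<in> borel_measurable borel"
proof -
  have "(\<lambda>u. \<integral>x. exp (\<i> * of_real (x * u)) * of_real (g x) \<partial>lborel) \<in> borel_measurable borel"
  proof -
    have [measurable]: "(\<lambda>x. g (snd x)) \<in> borel_measurable (borel \<Otimes>\<^sub>M borel)"
      by (rule measurable_compose[OF measurable_snd g])
    show ?thesis using g by (intro lborel.borel_measurable_lebesgue_integral) measurable
  qed
  then show ?thesis unfolding fourier_def[abs_def] .
qed

lemma fourier_bound: "cmod (fourier g u) \<le> (LINT x|lborel. \<bar>g x\<bar>)"
proof -
  have "cmod (fourier g u) \<le> (LINT x|lborel. cmod (exp (\<i> * of_real (x * u)) * of_real (g x)))"
    unfolding fourier_def by (rule integral_norm_bound)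
  also have "\<dots> = (LINT x|lborel. \<bar>g x\<bar>)"
    by (simp add: norm_mult norm_exp_i_times)
  finally show ?thesis .
qed



lemma div_diff_bound:
  fixes x m m' :: complex
  assumes "0 < d" "d \<le> cmod m" "d \<le> cmod m'"
  shows "cmod (x / m - x / m') \<le> cmod x * cmod (m - m') / d^2"
proof -
  have nz: "m \<noteq> 0" "m' \<noteq> 0" using assms by auto
  have "x / m - x / m' = x * (m' - m) / (m * m')" using nz by (simp add: field_simps)
  then have "cmod (x / m - x / m') = cmod x * cmod (m - m') / (cmod m * cmod m')"
    by (simp add: norm_mult norm_divide norm_minus_commute)
  also have "\<dots> \<le> cmod x * cmod (m - m') / (d * d)"
    using assms by (intro divide_left_mono mult_mono) (auto intro!: mult_pos_pos)
  finally show ?thesis by (simp add: power2_eq_square)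
qed

lemma S_lipschitz:
  fixes \<Theta> :: "param set" and W :: "real measure" and f :: "real \<Rightarrow> real" and \<theta>0 :: param
  assumes K: "compact \<Theta>" and sub: "\<Theta> \<subseteq> {(p, a, b). 0 < p \<and> p < 1/2 \<and> a \<noteq> b}" and t0: "\<theta>0 \<in> \<Theta>"
    and W: "finite_measure W" "sets W = sets borel"
    and P: "integrable W (\<lambda>u. 1 + \<bar>u\<bar> + u^2 + \<bar>u\<bar>^3)"
    and fm: "f \<in> borel_measurable borel"
  shows "\<exists>C. C-lipschitz_on \<Theta> (S W f \<theta>0)"
proof -
  define g where "g = mixdens f \<theta>0"
  have gm[measurable]: "g \<in> borel_measurable borel"
    unfolding g_def mixdens_def using fm by (cases \<theta>0) (simp, measurable)
  define \<phi> where "\<phi> = fourier g"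
  have \<phi>m[measurable]: "\<phi> \<in> borel_measurable borel" unfolding \<phi>_def by (rule fourier_meas[OF gm])
  define Kc where "Kc = (LINT x|lborel. \<bar>g x\<bar>)"
  have Kc: "0 \<le> Kc" unfolding Kc_def by (rule Bochner_Integration.integral_nonneg) simp
  have \<phi>b: "cmod (\<phi> u) \<le> Kc" for u unfolding \<phi>_def Kc_def by (rule fourier_bound)
  have fstc: "continuous_on \<Theta> (fst :: param \<Rightarrow> real)" by (intro continuous_intros)
  obtain xm where xm: "xm \<in> \<Theta>" "\<And>y. y \<in> \<Theta> \<Longrightarrow> fst y \<le> fst xm"
  proof -
    have "compact (fst ` \<Theta>)" by (rule compact_continuous_image[OF fstc K])
    moreover have "fst ` \<Theta> \<noteq> {}" using t0 by auto
    ultimately obtain s where "s \<in> fst ` \<Theta>" "\<forall>t\<in>fst ` \<Theta>. t \<le> s" using compact_attains_sup by metis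
    then obtain y where "y \<in> \<Theta>" "fst y = s" "\<forall>t\<in>\<Theta>. fst t \<le> s" by auto
    then show ?thesis using that[of y] by auto
  qed
  define q where "q = fst xm"
  have q: "q < 1/2" using sub xm(1) by (auto simp: q_def)
  have pq: "0 < fst \<theta> \<and> fst \<theta> \<le> q" if "\<theta> \<in> \<Theta>" for \<theta>
    using sub that xm(2)[OF that] by (auto simp: q_def)
  define \<delta> where "\<delta> = 1 - 2 * q"
  have \<delta>: "0 < \<delta>" using q by (simp add: \<delta>_def)
  have Ml: "\<delta> \<le> cmod (M \<theta> v)" if "\<theta> \<in> \<Theta>" for \<theta> v
    unfolding \<delta>_def using pq[OF that] by (intro M_lower) auto
  have Jeq: "J f \<theta>0 \<theta> u = \<phi> u / M \<theta> u - \<phi> (- u) / M \<theta> (- u)" for \<theta> u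
    by (simp add: J_def \<phi>_def g_def)
  have Jb: "cmod (J f \<theta>0 \<theta> u) \<le> 2 * Kc / \<delta>" if "\<theta> \<in> \<Theta>" for \<theta> u
  proof -
    have a: "cmod (\<phi> v / M \<theta> v) \<le> Kc / \<delta>" for v
      unfolding norm_divide using \<phi>b[of v] Ml[OF that, of v] \<delta> Kc by (intro frac_le) auto
    have "cmod (J f \<theta>0 \<theta> u) \<le> Kc / \<delta> + Kc / \<delta>"
      unfolding Jeq by (rule order_trans[OF norm_triangle_ineq4 add_mono]) (rule a, rule a)
    then show ?thesis by simp
  qed
  have Jlip: "cmod (J f \<theta>0 \<theta> u - J f \<theta>0 \<theta>' u) \<le> 2 * Kc * (2 + 2 * \<bar>u\<bar>) * norm (\<theta> - \<theta>') / \<delta>^2"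
    if t: "\<theta> \<in> \<Theta>" "\<theta>' \<in> \<Theta>" for \<theta> \<theta>' u
  proof -
    have one: "cmod (\<phi> v / M \<theta> v - \<phi> v / M \<theta>' v) \<le> Kc * ((2 + 2 * \<bar>v\<bar>) * norm (\<theta> - \<theta>')) / \<delta>^2" for v
    proof -
      have "cmod (\<phi> v / M \<theta> v - \<phi> v / M \<theta>' v) \<le> cmod (\<phi> v) * cmod (M \<theta> v - M \<theta>' v) / \<delta>^2"
        by (rule div_diff_bound[OF \<delta> Ml[OF t(1)] Ml[OF t(2)]])
      also have "\<dots> \<le> Kc * ((2 + 2 * \<bar>v\<bar>) * norm (\<theta> - \<theta>')) / \<delta>^2"
        using pq[OF t(2)] q \<phi>b[of v] Kc
        by (intro divide_right_mono mult_mono M_lip) auto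
      finally show ?thesis .
    qed
    have "J f \<theta>0 \<theta> u - J f \<theta>0 \<theta>' u = (\<phi> u / M \<theta> u - \<phi> u / M \<theta>' u) - (\<phi> (- u) / M \<theta> (- u) - \<phi> (- u) / M \<theta>' (- u))"
      unfolding Jeq by simp
    also have "cmod \<dots> \<le> cmod (\<phi> u / M \<theta> u - \<phi> u / M \<theta>' u) + cmod (\<phi> (- u) / M \<theta> (- u) - \<phi> (- u) / M \<theta>' (- u))"
      by (rule norm_triangle_ineq4)
    also have "\<dots> \<le> Kc * ((2 + 2 * \<bar>u\<bar>) * norm (\<theta> - \<theta>')) / \<delta>^2 + Kc * ((2 + 2 * \<bar>- u\<bar>) * norm (\<theta> - \<theta>')) / \<delta>^2"
      by (intro add_mono one)
    finally show ?thesis by (simp add: field_simps)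
  qed
  define C0 where "C0 = 16 * Kc^2 / \<delta>^3"
  have C0: "0 \<le> C0" using \<delta> by (simp add: C0_def)
  define Pf where "Pf = (\<lambda>u::real. 1 + \<bar>u\<bar> + u^2 + \<bar>u\<bar>^3)"
  have Pf: "0 \<le> Pf u" for u by (simp add: Pf_def)
  have J2lip: "cmod ((J f \<theta>0 \<theta> u)^2 - (J f \<theta>0 \<theta>' u)^2) \<le> C0 * norm (\<theta> - \<theta>') * Pf u"
    if t: "\<theta> \<in> \<Theta>" "\<theta>' \<in> \<Theta>" for \<theta> \<theta>' u
  proof -
    have "(J f \<theta>0 \<theta> u)^2 - (J f \<theta>0 \<theta>' u)^2 = (J f \<theta>0 \<theta> u - J f \<theta>0 \<theta>' u) * (J f \<theta>0 \<theta> u + J f \<theta>0 \<theta>' u)"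
      by (simp add: power2_eq_square algebra_simps)
    then have "cmod ((J f \<theta>0 \<theta> u)^2 - (J f \<theta>0 \<theta>' u)^2) = cmod (J f \<theta>0 \<theta> u - J f \<theta>0 \<theta>' u) * cmod (J f \<theta>0 \<theta> u + J f \<theta>0 \<theta>' u)"
      by (simp add: norm_mult)
    also have "\<dots> \<le> (2 * Kc * (2 + 2 * \<bar>u\<bar>) * norm (\<theta> - \<theta>') / \<delta>^2) * (2 * Kc / \<delta> + 2 * Kc / \<delta>)"
      using Jlip[OF t, of u] Jb[OF t(1), of u] Jb[OF t(2), of u]
      by (intro mult_mono order_trans[OF norm_triangle_ineq] add_mono) (auto intro!: divide_nonneg_nonneg mult_nonneg_nonneg simp: Kc)
    also have "\<dots> = C0 * norm (\<theta> - \<theta>') * (1 + \<bar>u\<bar>)"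
      using \<delta> by (simp add: C0_def field_simps power2_eq_square power3_eq_cube)
    also have "\<dots> \<le> C0 * norm (\<theta> - \<theta>') * Pf u"
      using C0 by (intro mult_left_mono) (auto simp: Pf_def)
    finally show ?thesis .
  qed
  have meq: "(borel_measurable W :: (real \<Rightarrow> complex) set) = borel_measurable borel"
    by (rule measurable_cong_sets[OF W(2)]) simp
  have Jint: "integrable W (\<lambda>u. (J f \<theta>0 \<theta> u)^2)" if t: "\<theta> \<in> \<Theta>" for \<theta>
  proof (rule finite_measure.integrable_const_bound[OF W(1)])
    show "AE u in W. cmod ((J f \<theta>0 \<theta> u)^2) \<le> (2 * Kc / \<delta>)^2"
      using Jb[OF t] by (intro AE_I2) (simp add: norm_power power_mono)
    have "(\<lambda>u. (J f \<theta>0 \<theta> u)^2) \<in> borel_measurable borel"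
      unfolding Jeq by measurable
    then show "(\<lambda>u. (J f \<theta>0 \<theta> u)^2) \<in> borel_measurable W" using meq by simp
  qed
  define C where "C = C0 * (LINT u|W. Pf u) / 4"
  have IP: "0 \<le> (LINT u|W. Pf u)" by (rule Bochner_Integration.integral_nonneg) (use Pf in auto)
  have "C-lipschitz_on \<Theta> (S W f \<theta>0)"
  proof (rule lipschitz_onI)
    fix \<theta> \<theta>' assume t: "\<theta> \<in> \<Theta>" "\<theta>' \<in> \<Theta>"
    have "S W f \<theta>0 \<theta> - S W f \<theta>0 \<theta>' = - (1/4) * (LINT u|W. (J f \<theta>0 \<theta> u)^2 - (J f \<theta>0 \<theta>' u)^2)"
      by (simp add: S_def Bochner_Integration.integral_diff[OF Jint[OF t(1)] Jint[OF t(2)]] algebra_simps)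
    then have "cmod (S W f \<theta>0 \<theta> - S W f \<theta>0 \<theta>') = (1/4) * cmod (LINT u|W. (J f \<theta>0 \<theta> u)^2 - (J f \<theta>0 \<theta>' u)^2)"
      by (simp add: norm_mult)
    also have "\<dots> \<le> (1/4) * (LINT u|W. cmod ((J f \<theta>0 \<theta> u)^2 - (J f \<theta>0 \<theta>' u)^2))"
      by (intro mult_left_mono integral_norm_bound) auto
    also have "\<dots> \<le> (1/4) * (LINT u|W. C0 * norm (\<theta> - \<theta>') * Pf u)"
    proof (intro mult_left_mono integral_mono)
      show "integrable W (\<lambda>u. cmod ((J f \<theta>0 \<theta> u)^2 - (J f \<theta>0 \<theta>' u)^2))"
        by (intro integrable_norm Bochner_Integration.integrable_diff Jint t)
      show "integrable W (\<lambda>u. C0 * norm (\<theta> - \<theta>') * Pf u)"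
        using P unfolding Pf_def by (rule integrable_mult_right)
    qed (use J2lip[OF t] in auto)
    also have "\<dots> = C * norm (\<theta> - \<theta>')" by (simp add: C_def)
    finally show "dist (S W f \<theta>0 \<theta>) (S W f \<theta>0 \<theta>') \<le> C * dist \<theta> \<theta>'" by (simp add: dist_norm)
  qed (use C0 IP in \<open>simp add: C_def\<close>)
  then show ?thesis by blast
qed



lemma Sm_Sn:
  fixes W :: "real measure"
  assumes W: "finite_measure W" "sets W = sets borel"
  shows "Sm k U0 UNIV (\<lambda>\<theta> _. Sn W X n h \<theta>)"
proof -
  define A where "A = {u::real. \<bar>u\<bar> \<le> 1 / h}"
  have "A = {- (1/h)..1/h}" by (auto simp: A_def abs_le_iff)
  then have A: "compact A" by simp
  define P where "P = {(j, k). j \<in> {1..n} \<and> k \<in> {1..n} \<and> j \<noteq> k}"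
  have fin: "finite P" by (rule finite_subset[of _ "{1..n} \<times> {1..n}"]) (auto simp: P_def)
  have each: "Sm k U0 UNIV (\<lambda>\<theta> _. LINT u:A|W. Zk (X (snd i)) \<theta> u * Zk (X (fst i)) \<theta> u)" for i
    by (rule Sm_integral[OF W open_U0 A Sm_mult[OF Sm_Zk Sm_Zk]])
  have "Sm k U0 UNIV (\<lambda>\<theta> v. of_real (- 1 / (4 * real n * (real n - 1))) *
      (\<Sum>i\<in>P. LINT u:A|W. Zk (X (snd i)) \<theta> u * Zk (X (fst i)) \<theta> u))"
    by (intro Sm_cmult Sm_sum fin each)
  then show ?thesis by (simp add: Sn_def A_def P_def split_beta)
qed

theorem lemma3:
  fixes \<Theta> :: "param set" and W :: "real measure" and f :: "real \<Rightarrow> real"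
    and p0 a0 b0 h :: real and X :: "nat \<Rightarrow> real" and n :: nat
  assumes "compact \<Theta>"
    and "\<Theta> \<subseteq> {(p, a, b). 0 < p \<and> p < 1/2 \<and> a \<noteq> b}"
    and "prob_space W" and "sets W = sets borel"
    and "absolutely_continuous lborel W"
    and "integrable W (\<lambda>u. 1 + \<bar>u\<bar> + u^2 + \<bar>u\<bar>^3)"
    and "f \<in> borel_measurable borel" and "\<And>x. 0 \<le> f x"
    and "(\<integral>\<^sup>+ x. ennreal (f x) \<partial>lborel) = 1"
    and "(p0, a0, b0) \<in> \<Theta>"
    and "n \<ge> 2" and "h > 0"
  shows "(\<exists>C. C-lipschitz_on \<Theta> (S W f (p0, a0, b0)))
       \<and> (\<exists>C. C-lipschitz_on \<Theta> (Sn W X n h))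
       \<and> (\<exists>(DS :: param \<Rightarrow> param \<Rightarrow>\<^sub>L complex) (HS :: param \<Rightarrow> param \<Rightarrow>\<^sub>L (param \<Rightarrow>\<^sub>L complex)).
            (\<forall>\<theta> \<in> {(p, a, b). 0 < p \<and> p < 1/2 \<and> a \<noteq> b}.
               (Sn W X n h has_derivative blinfun_apply (DS \<theta>)) (at \<theta>) \<and>
               (DS has_derivative blinfun_apply (HS \<theta>)) (at \<theta>)) \<and>
            (\<exists>C. C-lipschitz_on \<Theta> HS))"
proof -
  have W: "finite_measure W" "sets W = sets borel"
    using assms(3,4) by (auto intro: prob_space.finite_measure)
  have KU: "\<Theta> \<subseteq> U0" using assms(2) by (auto simp: U0_def)
  have sub2: "{(p, a, b). 0 < p \<and> p < 1/2 \<and> a \<noteq> b} \<subseteq> U0" by (auto simp: U0_def)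
  have i: "\<exists>C. C-lipschitz_on \<Theta> (S W f (p0, a0, b0))"
    by (rule S_lipschitz[OF assms(1,2,10) W assms(6,7)])
  have ii: "\<exists>C. C-lipschitz_on \<Theta> (Sn W X n h)"
    using Sm_lipschitz[OF Sm_Sn[OF W, where k="Suc 0"] open_U0 assms(1) KU] by simp
  obtain DS :: "param \<Rightarrow> param \<Rightarrow>\<^sub>L complex" and HS :: "param \<Rightarrow> param \<Rightarrow>\<^sub>L (param \<Rightarrow>\<^sub>L complex)" where
    D: "\<forall>\<theta> \<in> U0. (Sn W X n h has_derivative blinfun_apply (DS \<theta>)) (at \<theta>) \<and>
               (DS has_derivative blinfun_apply (HS \<theta>)) (at \<theta>)" and L: "\<exists>C. C-lipschitz_on \<Theta> HS"
    using hessian_part[OF Sm_Sn[OF W, where k=3 and X=X and n=n and h=h] _ open_U0 assms(1) KU, where I="Sn W X n h"] by auto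
  show ?thesis using i ii D L sub2 by blast
qed

end
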